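(* Let $A=\{a_1,\ldots,a_n\}$ and $B=\{b_1,\ldots,b_m\}$ be finite point sets in $\mathbb{R}^2$ with $m\le n$. Let $t\in\mathbb{R}^2$ be such that $\|b_p+t-a_r\|\neq\|b_p+t-a_s\|$ for all $p\in\{1,\ldots,m\}$ and all $r\ne s$ in $\{1,\ldots,n\}$, and let $\pi$ be an optimal matching for $t$. Then: (i) there is no cyclic sequence $(i_1,i_2,\ldots,i_k,i_1)$ of indices in $\{1,\ldots,m\}$ satisfying $\|b_{i_j}+t-a_{\pi(i_j)}\|>\|b_{i_j}+t-a_{\pi(i_{j+1})}\|$ for all $j\in\{1,\ldots,k\}$ (indices modulo $k$); (ii) each point of $B+t$ is matched by $\pi$ to one of its $m$ nearest neighbors in $A$; (iii) at least one point of $B+t$ is matched by $\pi$ to its nearest neighbor in $A$; (iv) there exists an ordering $(b_{i_1},\ldots,b_{i_m})$ of the elements of $B$ such that, for $k=1,\ldots,m$, $b_{i_k}+t$ is assigned by $\pi$ to its nearest neighbor in $A\setminus\{a_{\pi(i_1)},\ldots,a_{\pi(i_{k-1})}\}$; in particular, $b_{i_k}+t$ is assigned to one of its $k$ nearest neighbors in $A$.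
   Context: A matching is an injective map $\pi:B\to A$, writing $a_{\pi(i)}$ for the point assigned to $b_i$. Its cost at translation $t$ is $f(\pi,t)=\sum_{i=1}^m\|b_i+t-a_{\pi(i)}\|^2$. A matching $\pi$ is optimal for $t$ if it minimizes $f(\cdot,t)$ over all injective maps $B\to A$. *)

theory Defs
  imports "HOL-Analysis.Analysis"
begin

text \<open>Points a_1..a_n are a 0, ..., a (n-1); points b_1..b_m are b 0, ..., b (m-1).
  A matching is an injective map from indices of B to indices of A.\<close>

definition is_matching :: "nat \<Rightarrow> nat \<Rightarrow> (nat \<Rightarrow> nat) \<Rightarrow> bool" where
  "is_matching n m \<pi> \<longleftrightarrow> (\<forall>i<m. \<pi> i < n) \<and> inj_on \<pi> {..<m}"

definition match_cost :: "(nat \<Rightarrow> real^2) \<Rightarrow> (nat \<Rightarrow> real^2) \<Rightarrow> nat \<Rightarrow> (nat \<Rightarrow> nat) \<Rightarrow> real^2 \<Rightarrow> real" where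
  "match_cost a b m \<pi> t = (\<Sum>i<m. (norm (b i + t - a (\<pi> i)))\<^sup>2)"

definition optimal_matching ::
  "(nat \<Rightarrow> real^2) \<Rightarrow> (nat \<Rightarrow> real^2) \<Rightarrow> nat \<Rightarrow> nat \<Rightarrow> real^2 \<Rightarrow> (nat \<Rightarrow> nat) \<Rightarrow> bool" where
  "optimal_matching a b n m t \<pi> \<longleftrightarrow> is_matching n m \<pi> \<and>
     (\<forall>\<sigma>. is_matching n m \<sigma> \<longrightarrow> match_cost a b m \<pi> t \<le> match_cost a b m \<sigma> t)"

definition is_nearest :: "(nat \<Rightarrow> real^2) \<Rightarrow> nat set \<Rightarrow> real^2 \<Rightarrow> nat \<Rightarrow> bool" where
  "is_nearest a I x r \<longleftrightarrow> r \<in> I \<and> (\<forall>s\<in>I. norm (x - a r) \<le> norm (x - a s))"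

definition among_k_nearest :: "(nat \<Rightarrow> real^2) \<Rightarrow> nat set \<Rightarrow> real^2 \<Rightarrow> nat \<Rightarrow> nat \<Rightarrow> bool" where
  "among_k_nearest a I x k r \<longleftrightarrow> r \<in> I \<and> card {s\<in>I. norm (x - a s) < norm (x - a r)} < k"

end

theory Submission
  imports Defs
begin

lemma sq_lt: "(x::real) \<ge> 0 \<Longrightarrow> x < y \<Longrightarrow> x\<^sup>2 < y\<^sup>2"
  by (simp add: power_strict_mono)

lemma cycle_sub:
  assumes "finite R" "R \<noteq> {}" "f ` R \<subseteq> R"
  shows "\<exists>C\<subseteq>R. C \<noteq> {} \<and> f ` C = C"
  using assms
proof (induction "card R" arbitrary: R rule: less_induct)
  case less
  show ?case
  proof (cases "f ` R = R")
    case True then show ?thesis using less.prems(2) by (intro exI[of _ R]) simp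
  next
    case False
    then have ps: "f ` R \<subset> R" using less.prems by blast
    then have "card (f ` R) < card R" using less.prems(1) by (simp add: psubset_card_mono)
    moreover have "finite (f ` R)" using less.prems by simp
    moreover have "f ` R \<noteq> {}" using less.prems by blast
    moreover have "f ` (f ` R) \<subseteq> f ` R" using less.prems by blast
    ultimately have "\<exists>C\<subseteq>f ` R. C \<noteq> {} \<and> f ` C = C"
      by (rule less.hyps)
    then obtain C where "C \<subseteq> f ` R" "C \<noteq> {}" "f ` C = C" by blast
    then show ?thesis using ps by (intro exI[of _ C]) auto
  qed
qed

lemma no_improve_cycle:
  assumes opt: "optimal_matching a b n m t \<pi>" and C: "C \<subseteq> {..<m}" "C \<noteq> {}" "f ` C = C"
    and pref: "\<forall>i\<in>C. norm (b i + t - a (\<pi> (f i))) < norm (b i + t - a (\<pi> i))"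
  shows False
proof -
  have fin: "finite C" using C(1) finite_subset by blast
  have finj: "inj_on f C" using finite_surj_inj[OF fin] C(3) by simp
  have pm: "is_matching n m \<pi>" using opt by (simp add: optimal_matching_def)
  then have plt: "\<And>i. i < m \<Longrightarrow> \<pi> i < n" and pinj: "inj_on \<pi> {..<m}"
    by (auto simp: is_matching_def)
  define \<sigma> where "\<sigma> i = (if i \<in> C then \<pi> (f i) else \<pi> i)" for i
  have fC: "\<And>i. i \<in> C \<Longrightarrow> f i \<in> C" using C(3) by blast
  have sm: "is_matching n m \<sigma>"
    unfolding is_matching_def
  proof
    show "\<forall>i<m. \<sigma> i < n" using fC C(1) plt by (auto simp: \<sigma>_def)
    show "inj_on \<sigma> {..<m}"
    proof (rule inj_onI)
      fix i j assume ij: "i \<in> {..<m}" "j \<in> {..<m}" "\<sigma> i = \<sigma> j"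
      show "i = j"
      proof (cases "i \<in> C"; cases "j \<in> C")
        assume c: "i \<in> C" "j \<in> C"
        then have e: "\<pi> (f i) = \<pi> (f j)" using ij by (simp add: \<sigma>_def)
        have "f i = f j" by (rule inj_onD[OF pinj e]) (use fC C(1) c in auto)
        then show ?thesis by (rule inj_onD[OF finj _ c])
      next
        assume c: "i \<in> C" "j \<notin> C"
        then have e: "\<pi> (f i) = \<pi> j" using ij by (simp add: \<sigma>_def)
        have "f i = j" by (rule inj_onD[OF pinj e]) (use fC C(1) c ij in auto)
        then show ?thesis using fC c by blast
      next
        assume c: "i \<notin> C" "j \<in> C"
        then have e: "\<pi> i = \<pi> (f j)" using ij by (simp add: \<sigma>_def)
        have "i = f j" by (rule inj_onD[OF pinj e]) (use fC C(1) c ij in auto)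
        then show ?thesis using fC c by blast
      next
        assume c: "i \<notin> C" "j \<notin> C"
        then have e: "\<pi> i = \<pi> j" using ij by (simp add: \<sigma>_def)
        show ?thesis by (rule inj_onD[OF pinj e]) (use ij in auto)
      qed
    qed
  qed
  have "match_cost a b m \<sigma> t < match_cost a b m \<pi> t"
    unfolding match_cost_def
  proof (rule sum_strict_mono_ex1)
    show "\<forall>x\<in>{..<m}. (norm (b x + t - a (\<sigma> x)))\<^sup>2 \<le> (norm (b x + t - a (\<pi> x)))\<^sup>2"
    proof
      fix x assume "x \<in> {..<m}"
      show "(norm (b x + t - a (\<sigma> x)))\<^sup>2 \<le> (norm (b x + t - a (\<pi> x)))\<^sup>2"
      proof (cases "x \<in> C")
        case True
        then have "norm (b x + t - a (\<sigma> x)) < norm (b x + t - a (\<pi> x))"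
          using pref by (simp add: \<sigma>_def)
        then show ?thesis using sq_lt[OF norm_ge_zero] by (meson less_imp_le)
      qed (simp add: \<sigma>_def)
    qed
    obtain c where "c \<in> C" using C(2) by blast
    show "\<exists>x\<in>{..<m}. (norm (b x + t - a (\<sigma> x)))\<^sup>2 < (norm (b x + t - a (\<pi> x)))\<^sup>2"
    proof (rule bexI[of _ c])
      show "c \<in> {..<m}" using C(1) \<open>c \<in> C\<close> by auto
      have "norm (b c + t - a (\<sigma> c)) < norm (b c + t - a (\<pi> c))"
        using pref \<open>c \<in> C\<close> by (simp add: \<sigma>_def)
      then show "(norm (b c + t - a (\<sigma> c)))\<^sup>2 < (norm (b c + t - a (\<pi> c)))\<^sup>2"
        using sq_lt[OF norm_ge_zero] by blast
    qed
  qed simp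
  moreover have "match_cost a b m \<pi> t \<le> match_cost a b m \<sigma> t"
    using opt sm by (simp add: optimal_matching_def)
  ultimately show False by simp
qed

lemma no_improve_single:
  assumes opt: "optimal_matching a b n m t \<pi>" and i: "i < m" and s: "s < n" "s \<notin> \<pi> ` {..<m}"
    and lt: "norm (b i + t - a s) < norm (b i + t - a (\<pi> i))"
  shows False
proof -
  have pm: "is_matching n m \<pi>" using opt by (simp add: optimal_matching_def)
  then have plt: "\<And>i. i < m \<Longrightarrow> \<pi> i < n" and pinj: "inj_on \<pi> {..<m}"
    by (auto simp: is_matching_def)
  define \<sigma> where "\<sigma> = \<pi>(i := s)"
  have sm: "is_matching n m \<sigma>"
    unfolding is_matching_def
  proof
    show "\<forall>i<m. \<sigma> i < n" using plt s by (auto simp: \<sigma>_def)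
    show "inj_on \<sigma> {..<m}"
    proof (rule inj_onI)
      fix x y assume xy: "x \<in> {..<m}" "y \<in> {..<m}" "\<sigma> x = \<sigma> y"
      show "x = y"
        using xy s pinj unfolding \<sigma>_def
        by (cases "x = i"; cases "y = i") (auto dest: inj_onD)
    qed
  qed
  have "match_cost a b m \<sigma> t < match_cost a b m \<pi> t"
    unfolding match_cost_def
  proof (rule sum_strict_mono_ex1)
    show "\<forall>x\<in>{..<m}. (norm (b x + t - a (\<sigma> x)))\<^sup>2 \<le> (norm (b x + t - a (\<pi> x)))\<^sup>2"
    proof
      fix x assume "x \<in> {..<m}"
      show "(norm (b x + t - a (\<sigma> x)))\<^sup>2 \<le> (norm (b x + t - a (\<pi> x)))\<^sup>2"
      proof (cases "x = i")
        case True
        then show ?thesis using less_imp_le[OF sq_lt[OF norm_ge_zero lt]] lt by (simp add: \<sigma>_def)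
      qed (simp add: \<sigma>_def)
    qed
    show "\<exists>x\<in>{..<m}. (norm (b x + t - a (\<sigma> x)))\<^sup>2 < (norm (b x + t - a (\<pi> x)))\<^sup>2"
      using sq_lt[OF norm_ge_zero lt] i by (intro bexI[of _ i]) (auto simp: \<sigma>_def)
  qed simp
  moreover have "match_cost a b m \<pi> t \<le> match_cost a b m \<sigma> t"
    using opt sm by (simp add: optimal_matching_def)
  ultimately show False by simp
qed

lemma no_pref_fun:
  assumes opt: "optimal_matching a b n m t \<pi>" and R: "R \<subseteq> {..<m}" "R \<noteq> {}"
    and pref: "\<forall>i\<in>R. \<exists>j\<in>R. norm (b i + t - a (\<pi> j)) < norm (b i + t - a (\<pi> i))"
  shows False
proof -
  obtain f where f: "\<forall>i\<in>R. f i \<in> R \<and> norm (b i + t - a (\<pi> (f i))) < norm (b i + t - a (\<pi> i))"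
  proof -
    have "\<forall>i\<in>R. \<exists>j. j \<in> R \<and> norm (b i + t - a (\<pi> j)) < norm (b i + t - a (\<pi> i))"
      using pref by blast
    from bchoice[OF this] show ?thesis using that by blast
  qed
  have "finite R" using R(1) finite_subset by blast
  moreover have "f ` R \<subseteq> R" using f by blast
  ultimately obtain C where C: "C \<subseteq> R" "C \<noteq> {}" "f ` C = C" using cycle_sub R(2) by metis
  show False
    by (rule no_improve_cycle[OF opt _ C(2) C(3)]) (use C R f in auto)
qed

lemma greedy_step:
  assumes opt: "optimal_matching a b n m t \<pi>" and D: "D \<subseteq> {..<m}" "D \<noteq> {..<m}"
  shows "\<exists>i\<in>{..<m}-D. is_nearest a ({..<n} - \<pi> ` D) (b i + t) (\<pi> i)"
proof (rule ccontr)
  assume nn: "\<not> ?thesis"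
  have pm: "is_matching n m \<pi>" using opt by (simp add: optimal_matching_def)
  then have plt: "\<And>i. i < m \<Longrightarrow> \<pi> i < n" and pinj: "inj_on \<pi> {..<m}"
    by (auto simp: is_matching_def)
  let ?R = "{..<m} - D"
  have "?R \<noteq> {}" using D by blast
  moreover have "\<forall>i\<in>?R. \<exists>j\<in>?R. norm (b i + t - a (\<pi> j)) < norm (b i + t - a (\<pi> i))"
  proof
    fix i assume iR: "i \<in> ?R"
    have "\<pi> i \<notin> \<pi> ` D" using iR D(1) pinj by (auto dest: inj_onD)
    then have "\<pi> i \<in> {..<n} - \<pi> ` D" using plt iR by auto
    then obtain s where s: "s \<in> {..<n} - \<pi> ` D" "norm (b i + t - a s) < norm (b i + t - a (\<pi> i))"
      using nn iR unfolding is_nearest_def by force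
    show "\<exists>j\<in>?R. norm (b i + t - a (\<pi> j)) < norm (b i + t - a (\<pi> i))"
    proof (cases "s \<in> \<pi> ` {..<m}")
      case True
      then obtain j where "j < m" "s = \<pi> j" by blast
      then show ?thesis using s by (intro bexI[of _ j]) auto
    next
      case False
      then have False using no_improve_single[OF opt _ _ False s(2)] iR s(1) by auto
      then show ?thesis ..
    qed
  qed
  ultimately show False using no_pref_fun[OF opt, of ?R] by blast
qed

lemma greedy_seq:
  assumes opt: "optimal_matching a b n m t \<pi>"
  shows "k \<le> m \<Longrightarrow> \<exists>\<sigma>. inj_on \<sigma> {..<k} \<and> \<sigma> ` {..<k} \<subseteq> {..<m} \<and>
     (\<forall>j<k. is_nearest a ({..<n} - \<pi> ` \<sigma> ` {..<j}) (b (\<sigma> j) + t) (\<pi> (\<sigma> j)))"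
proof (induction k)
  case 0 then show ?case by auto
next
  case (Suc k)
  then obtain \<sigma> where s: "inj_on \<sigma> {..<k}" "\<sigma> ` {..<k} \<subseteq> {..<m}"
    "\<forall>j<k. is_nearest a ({..<n} - \<pi> ` \<sigma> ` {..<j}) (b (\<sigma> j) + t) (\<pi> (\<sigma> j))" by auto
  have "card (\<sigma> ` {..<k}) = k" using s(1) by (simp add: card_image)
  then have "\<sigma> ` {..<k} \<noteq> {..<m}" using Suc.prems by auto
  then obtain i where i: "i \<in> {..<m} - \<sigma> ` {..<k}"
    "is_nearest a ({..<n} - \<pi> ` \<sigma> ` {..<k}) (b i + t) (\<pi> i)"
    using greedy_step[OF opt s(2)] by blast
  define \<sigma>' where "\<sigma>' = \<sigma>(k := i)"
  have img: "\<sigma>' ` {..<j} = \<sigma> ` {..<j}" if "j \<le> k" for j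
    using that by (auto simp: \<sigma>'_def)
  have "inj_on \<sigma>' {..<Suc k}"
    unfolding lessThan_Suc using s(1) i(1) img[of k] by (auto simp: \<sigma>'_def inj_on_def)
  moreover have "\<sigma>' ` {..<Suc k} \<subseteq> {..<m}"
    unfolding lessThan_Suc using s(2) i(1) img[of k] by (auto simp: \<sigma>'_def)
  moreover have "\<forall>j<Suc k. is_nearest a ({..<n} - \<pi> ` \<sigma>' ` {..<j}) (b (\<sigma>' j) + t) (\<pi> (\<sigma>' j))"
  proof (intro allI impI)
    fix j assume "j < Suc k"
    then have "j \<le> k" by simp
    show "is_nearest a ({..<n} - \<pi> ` \<sigma>' ` {..<j}) (b (\<sigma>' j) + t) (\<pi> (\<sigma>' j))"
    proof (cases "j = k")
      case True then show ?thesis using img[of k] i(2) by (simp add: \<sigma>'_def)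
    next
      case False
      then have "j < k" using \<open>j \<le> k\<close> by simp
      then show ?thesis using img[OF \<open>j \<le> k\<close>] s(3) by (simp add: \<sigma>'_def)
    qed
  qed
  ultimately show ?case by (intro exI[of _ \<sigma>']) blast
qed

theorem lemma4:
  fixes a b :: "nat \<Rightarrow> real^2" and n m :: nat and t :: "real^2" and \<pi> :: "nat \<Rightarrow> nat"
  assumes "1 \<le> m" and "m \<le> n"
    and "inj_on a {..<n}" and "inj_on b {..<m}"
    and gen: "\<And>p r s. p < m \<Longrightarrow> r < n \<Longrightarrow> s < n \<Longrightarrow> r \<noteq> s \<Longrightarrow>
                norm (b p + t - a r) \<noteq> norm (b p + t - a s)"
    and opt: "optimal_matching a b n m t \<pi>"
  shows "(\<not> (\<exists>k::nat. \<exists>i::nat \<Rightarrow> nat. k \<ge> 1 \<and> (\<forall>j<k. i j < m) \<and>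
            (\<forall>j<k. norm (b (i j) + t - a (\<pi> (i j)))
                     > norm (b (i j) + t - a (\<pi> (i ((j + 1) mod k))))))) \<and>
         (\<forall>i<m. among_k_nearest a {..<n} (b i + t) m (\<pi> i)) \<and>
         (\<exists>i<m. is_nearest a {..<n} (b i + t) (\<pi> i)) \<and>
         (\<exists>\<sigma>. bij_betw \<sigma> {..<m} {..<m} \<and>
           (\<forall>k<m. is_nearest a ({..<n} - \<pi> ` \<sigma> ` {..<k}) (b (\<sigma> k) + t) (\<pi> (\<sigma> k))) \<and>
           (\<forall>k<m. among_k_nearest a {..<n} (b (\<sigma> k) + t) (k + 1) (\<pi> (\<sigma> k))))"
proof -
  have pm: "is_matching n m \<pi>" using opt by (simp add: optimal_matching_def)
  then have plt: "\<And>i. i < m \<Longrightarrow> \<pi> i < n" and pinj: "inj_on \<pi> {..<m}"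
    by (auto simp: is_matching_def)
  obtain \<sigma> where s: "inj_on \<sigma> {..<m}" "\<sigma> ` {..<m} \<subseteq> {..<m}"
    "\<forall>j<m. is_nearest a ({..<n} - \<pi> ` \<sigma> ` {..<j}) (b (\<sigma> j) + t) (\<pi> (\<sigma> j))"
    using greedy_seq[OF opt, of m] by auto
  have "\<sigma> ` {..<m} = {..<m}"
    using s(1,2) by (simp add: card_image card_subset_eq)
  then have bij: "bij_betw \<sigma> {..<m} {..<m}" using s(1) by (simp add: bij_betw_def)
  have akn: "\<forall>k<m. among_k_nearest a {..<n} (b (\<sigma> k) + t) (k + 1) (\<pi> (\<sigma> k))"
  proof (intro allI impI)
    fix k assume k: "k < m"
    have near: "is_nearest a ({..<n} - \<pi> ` \<sigma> ` {..<k}) (b (\<sigma> k) + t) (\<pi> (\<sigma> k))"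
      using s(3) k by auto
    have sub: "{s\<in>{..<n}. norm (b (\<sigma> k) + t - a s) < norm (b (\<sigma> k) + t - a (\<pi> (\<sigma> k)))}
        \<subseteq> \<pi> ` \<sigma> ` {..<k}"
      using near unfolding is_nearest_def by force
    have "card {s\<in>{..<n}. norm (b (\<sigma> k) + t - a s) < norm (b (\<sigma> k) + t - a (\<pi> (\<sigma> k)))}
        \<le> card (\<pi> ` \<sigma> ` {..<k})"
      by (rule card_mono[OF _ sub]) simp
    also have "\<dots> \<le> card (\<sigma> ` {..<k})" by (rule card_image_le) simp
    also have "\<dots> \<le> k" using card_image_le[of "{..<k}" \<sigma>] by simp
    finally show "among_k_nearest a {..<n} (b (\<sigma> k) + t) (k + 1) (\<pi> (\<sigma> k))"
      unfolding among_k_nearest_def using near by (auto simp: is_nearest_def)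
  qed
  have p4: "\<exists>\<sigma>. bij_betw \<sigma> {..<m} {..<m} \<and>
           (\<forall>k<m. is_nearest a ({..<n} - \<pi> ` \<sigma> ` {..<k}) (b (\<sigma> k) + t) (\<pi> (\<sigma> k))) \<and>
           (\<forall>k<m. among_k_nearest a {..<n} (b (\<sigma> k) + t) (k + 1) (\<pi> (\<sigma> k)))"
    using bij s(3) akn by (intro exI[of _ \<sigma>]) blast
  have p3: "\<exists>i<m. is_nearest a {..<n} (b i + t) (\<pi> i)"
  proof -
    have "0 < m" using assms(1) by simp
    then have "is_nearest a {..<n} (b (\<sigma> 0) + t) (\<pi> (\<sigma> 0))" using s(3) by auto
    moreover have "\<sigma> 0 < m" using s(2) \<open>0 < m\<close> by auto
    ultimately show ?thesis by auto
  qed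
  have p2: "\<forall>i<m. among_k_nearest a {..<n} (b i + t) m (\<pi> i)"
  proof (intro allI impI)
    fix i assume "i < m"
    then obtain k where k: "k < m" "i = \<sigma> k" using \<open>\<sigma> ` {..<m} = {..<m}\<close>
      by (metis imageE lessThan_iff)
    then show "among_k_nearest a {..<n} (b i + t) m (\<pi> i)"
      using akn unfolding among_k_nearest_def by force
  qed
  have p1: "\<not> (\<exists>k::nat. \<exists>i::nat \<Rightarrow> nat. k \<ge> 1 \<and> (\<forall>j<k. i j < m) \<and>
            (\<forall>j<k. norm (b (i j) + t - a (\<pi> (i j)))
                     > norm (b (i j) + t - a (\<pi> (i ((j + 1) mod k))))))"
  proof
    assume "\<exists>k::nat. \<exists>i::nat \<Rightarrow> nat. k \<ge> 1 \<and> (\<forall>j<k. i j < m) \<and>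
            (\<forall>j<k. norm (b (i j) + t - a (\<pi> (i j)))
                     > norm (b (i j) + t - a (\<pi> (i ((j + 1) mod k)))))"
    then obtain k and i :: "nat \<Rightarrow> nat" where k: "k \<ge> 1" "\<forall>j<k. i j < m"
      "\<forall>j<k. norm (b (i j) + t - a (\<pi> (i j))) > norm (b (i j) + t - a (\<pi> (i ((j + 1) mod k))))"
      by blast
    show False
    proof (rule no_pref_fun[OF opt, of "i ` {..<k}"])
      show "i ` {..<k} \<subseteq> {..<m}" using k by auto
      show "i ` {..<k} \<noteq> {}" using k(1) by (simp add: lessThan_empty_iff)
      show "\<forall>x\<in>i ` {..<k}. \<exists>y\<in>i ` {..<k}. norm (b x + t - a (\<pi> y)) < norm (b x + t - a (\<pi> x))"
      proof
        fix x assume "x \<in> i ` {..<k}"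
        then obtain j where j: "j < k" "x = i j" by blast
        have "(j + 1) mod k < k" using k(1) by simp
        then show "\<exists>y\<in>i ` {..<k}. norm (b x + t - a (\<pi> y)) < norm (b x + t - a (\<pi> x))"
          using j k(3) by (intro bexI[of _ "i ((j + 1) mod k)"]) auto
      qed
    qed
  qed
  show ?thesis using p1 p2 p3 p4 by blast
qed

end
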